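(* Let $A$ be a Banach algebra, and let $(\pi_1,X)$ be a left Banach $A$-module and $(X,\pi_2)$ a right Banach $A$-module. (i) If $A$ has a bounded left approximate identity for $X$, then the bilinear map $\pi_1^{r*}:X^*\times X\to A^*$ is Arens regular if and only if $X$ is reflexive. (ii) If $A$ has a bounded right approximate identity for $X$, then the bilinear map $\pi_2^{*}:X^*\times X\to A^*$ is Arens regular if and only if $X$ is reflexive.
   Context: For a bounded bilinear map $f:X\times Y\to Z$, the adjoint $f^*:Z^*\times X\to Y^*$ is defined by $\langle f^*(z^*,x),y\rangle=\langle z^*,f(x,y)\rangle$, and iterating gives $f^{**}$, $f^{***}:X^{**}\times Y^{**}\to Z^{**}$, etc. The flip is $f^r(y,x)=f(x,y)$; superscripts are applied successively left to right, so $\pi_1^{r*}$ is the adjoint of the flip $\pi_1^r:X\times A\to X$ of $\pi_1$. A bounded bilinear $f$ is Arens regular if $f^{***}=f^{r***r}$. A left Banach $A$-module $(\pi_1,X)$ is a Banach space $X$ with a bounded bilinear $\pi_1:A\times X\to X$ satisfying $\pi_1(ab,x)=\pi_1(a,\pi_1(b,x))$; a right Banach $A$-module $(X,\pi_2)$ is defined analogously with $\pi_2:X\times A\to X$, $\pi_2(x,ab)=\pi_2(\pi_2(x,a),b)$. A bounded net $(e_\alpha)$ in $A$ is a left approximate identity for $X$ if $\pi_1(e_\alpha,x)\to x$ for all $x\in X$, and a right approximate identity for $X$ if $\pi_2(x,e_\alpha)\to x$ for all $x\in X$. *)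

theory Defs
  imports "HOL-Analysis.Analysis"
begin

definition adj ::
  "('a::real_normed_vector \<Rightarrow> 'b::real_normed_vector \<Rightarrow> 'c::real_normed_vector)
     \<Rightarrow> ('c \<Rightarrow>\<^sub>L real) \<Rightarrow> 'a \<Rightarrow> ('b \<Rightarrow>\<^sub>L real)" where
  "adj f = (\<lambda>z x. Blinfun (\<lambda>y. blinfun_apply z (f x y)))"

definition bflip :: "('a \<Rightarrow> 'b \<Rightarrow> 'c) \<Rightarrow> 'b \<Rightarrow> 'a \<Rightarrow> 'c" where
  "bflip f = (\<lambda>y x. f x y)"

definition arens_regular ::
  "('a::real_normed_vector \<Rightarrow> 'b::real_normed_vector \<Rightarrow> 'c::real_normed_vector) \<Rightarrow> bool" where
  "arens_regular f \<longleftrightarrow> adj (adj (adj f)) = bflip (adj (adj (adj (bflip f))))"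

definition canon_embed :: "'a::real_normed_vector \<Rightarrow> (('a \<Rightarrow>\<^sub>L real) \<Rightarrow>\<^sub>L real)" where
  "canon_embed x = Blinfun (\<lambda>f. blinfun_apply f x)"

definition reflexive_space :: "'a::real_normed_vector itself \<Rightarrow> bool" where
  "reflexive_space _ \<longleftrightarrow> surj (canon_embed :: 'a \<Rightarrow> _)"

definition left_banach_module ::
  "('a::real_normed_algebra \<Rightarrow> 'x::real_normed_vector \<Rightarrow> 'x) \<Rightarrow> bool" where
  "left_banach_module \<pi>1 \<longleftrightarrow> bounded_bilinear \<pi>1 \<and>
     (\<forall>a b x. \<pi>1 (a * b) x = \<pi>1 a (\<pi>1 b x))"

definition right_banach_module ::
  "('x::real_normed_vector \<Rightarrow> 'a::real_normed_algebra \<Rightarrow> 'x) \<Rightarrow> bool" where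
  "right_banach_module \<pi>2 \<longleftrightarrow> bounded_bilinear \<pi>2 \<and>
     (\<forall>a b x. \<pi>2 x (a * b) = \<pi>2 (\<pi>2 x a) b)"

(* Bounded approximate identities for X: a bounded net e indexed along a
  proper filter F (nets = families converging along a filter). *)
definition bounded_left_approx_identity ::
  "('a::real_normed_algebra \<Rightarrow> 'x::real_normed_vector \<Rightarrow> 'x) \<Rightarrow> ('i \<Rightarrow> 'a) \<Rightarrow> 'i filter \<Rightarrow> bool" where
  "bounded_left_approx_identity \<pi>1 e F \<longleftrightarrow> F \<noteq> bot \<and> bounded (range e) \<and>
     (\<forall>x. ((\<lambda>\<alpha>. \<pi>1 (e \<alpha>) x) \<longlongrightarrow> x) F)"

definition bounded_right_approx_identity ::
  "('x::real_normed_vector \<Rightarrow> 'a::real_normed_algebra \<Rightarrow> 'x) \<Rightarrow> ('i \<Rightarrow> 'a) \<Rightarrow> 'i filter \<Rightarrow> bool" where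
  "bounded_right_approx_identity \<pi>2 e F \<longleftrightarrow> F \<noteq> bot \<and> bounded (range e) \<and>
     (\<forall>x. ((\<lambda>\<alpha>. \<pi>2 x (e \<alpha>)) \<longlongrightarrow> x) F)"

end

theory Submission
  imports Defs
begin


lemma hb_core:
  fixes S :: "'a::real_normed_vector set" and f :: "'a \<Rightarrow> real" and C :: real
  assumes S: "subspace S"
    and fadd: "\<forall>x\<in>S. \<forall>y\<in>S. f (x + y) = f x + f y"
    and fscale: "\<forall>x\<in>S. \<forall>c. f (c *\<^sub>R x) = c * f x"
    and bd: "\<forall>x\<in>S. f x \<le> C * norm x" and C: "C \<ge> 0"
  shows "\<exists>\<phi>::'a\<Rightarrow>\<^sub>L real. (\<forall>x\<in>S. blinfun_apply \<phi> x = f x) \<and> norm \<phi> \<le> C"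
proof -
  define G0 where "G0 = (\<lambda>x. (x, f x)) ` S"
  define good where "good G \<longleftrightarrow> subspace G \<and> G0 \<subseteq> G \<and> (\<forall>(x,y)\<in>G. y \<le> C * norm x)"
    for G :: "('a \<times> real) set"
  have f0: "f 0 = 0" using fscale S by (metis subspace_0 mult_zero_left scaleR_zero_left)
  have goodG0: "good G0"
    unfolding good_def G0_def subspace_def
  proof (intro conjI ballI allI)
    have "0 \<in> S" using S subspace_0 by blast
    then have "(0, f 0) \<in> (\<lambda>x. (x, f x)) ` S" by (rule imageI)
    then show "(0::'a\<times>real) \<in> (\<lambda>x. (x, f x)) ` S" using f0 by (simp add: zero_prod_def)
  next
    fix u v assume "u \<in> (\<lambda>x. (x, f x)) ` S" "v \<in> (\<lambda>x. (x, f x)) ` S"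
    then obtain a b where ab: "a \<in> S" "b \<in> S" "u = (a, f a)" "v = (b, f b)" by blast
    then have "a + b \<in> S" using S subspace_add by blast
    then have "(a + b, f (a + b)) \<in> (\<lambda>x. (x, f x)) ` S" by (rule imageI)
    then show "u + v \<in> (\<lambda>x. (x, f x)) ` S" using ab fadd by simp
  next
    fix c and u :: "'a\<times>real" assume "u \<in> (\<lambda>x. (x, f x)) ` S"
    then obtain a where ab: "a \<in> S" "u = (a, f a)" by blast
    then have "c *\<^sub>R a \<in> S" using S subspace_scale by blast
    then have "(c *\<^sub>R a, f (c *\<^sub>R a)) \<in> (\<lambda>x. (x, f x)) ` S" by (rule imageI)
    then show "c *\<^sub>R u \<in> (\<lambda>x. (x, f x)) ` S" using ab fscale by simp
  qed (use bd in auto)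
  have uniq: "y = y'" if "good G" "(x,y) \<in> G" "(x,y') \<in> G" for G x y y'
  proof -
    have sG: "subspace G" using that(1) good_def by blast
    have "(x,y) - (x,y') \<in> G" "(x,y') - (x,y) \<in> G" using sG that subspace_diff by blast+
    then have "y - y' \<le> 0" "y' - y \<le> 0" using that(1) unfolding good_def by auto
    then show ?thesis by simp
  qed
  have chains: "\<forall>Ch\<in>chains (Collect good). \<exists>U\<in>Collect good. \<forall>X\<in>Ch. X \<subseteq> U"
  proof
    fix Ch assume Ch: "Ch \<in> chains (Collect good)"
    show "\<exists>U\<in>Collect good. \<forall>X\<in>Ch. X \<subseteq> U"
    proof (cases "Ch = {}")
      case True then show ?thesis using goodG0 by auto
    next
      case False
      have gd: "\<And>X. X \<in> Ch \<Longrightarrow> good X" using Ch unfolding chains_def by auto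
      have ch: "\<And>X Y. X \<in> Ch \<Longrightarrow> Y \<in> Ch \<Longrightarrow> X \<subseteq> Y \<or> Y \<subseteq> X"
        using Ch unfolding chains_def chain_subset_def by auto
      have "good (\<Union>Ch)"
        unfolding good_def
      proof (intro conjI)
        show "subspace (\<Union>Ch)"
          unfolding subspace_def
        proof (intro conjI ballI allI)
          obtain X where "X \<in> Ch" using False by auto
          then show "0 \<in> \<Union>Ch" using gd good_def subspace_0 by blast
        next
          fix u v assume "u \<in> \<Union>Ch" "v \<in> \<Union>Ch"
          then obtain X Y where XY: "X \<in> Ch" "Y \<in> Ch" "u \<in> X" "v \<in> Y" by auto
          then consider "X \<subseteq> Y" | "Y \<subseteq> X" using ch by blast
          then show "u + v \<in> \<Union>Ch"
          proof cases
            case 1 then show ?thesis using XY gd[of Y] good_def subspace_add by blast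
          next
            case 2 then show ?thesis using XY gd[of X] good_def subspace_add by blast
          qed
        next
          fix c u assume "u \<in> \<Union>Ch"
          then show "c *\<^sub>R u \<in> \<Union>Ch" using gd good_def subspace_scale by blast
        qed
        show "G0 \<subseteq> \<Union>Ch" using False gd good_def by blast
        show "\<forall>(x, y)\<in>\<Union>Ch. y \<le> C * norm x" using gd good_def by blast
      qed
      then show ?thesis by auto
    qed
  qed
  obtain G where G: "good G" and maxG: "\<And>X. good X \<Longrightarrow> G \<subseteq> X \<Longrightarrow> X = G"
    using Zorn_Lemma2[OF chains] by auto
  have sG: "subspace G" using G good_def by blast
  have bG: "\<And>x y. (x,y) \<in> G \<Longrightarrow> y \<le> C * norm x" using G good_def by blast
  have total: "\<exists>y. (z,y) \<in> G" for z
  proof (rule ccontr)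
    assume nz: "\<nexists>y. (z, y) \<in> G"
    define P where "P = {y - C * norm (x - z) | x y. (x,y) \<in> G}"
    define c where "c = Sup P"
    have key: "y1 - C * norm (x1 - z) \<le> C * norm (x2 + z) - y2"
      if "(x1,y1) \<in> G" "(x2,y2) \<in> G" for x1 y1 x2 y2
    proof -
      have "(x1,y1) + (x2,y2) \<in> G" using that sG subspace_add by blast
      then have "y1 + y2 \<le> C * norm (x1 + x2)" using bG by auto
      also have "norm (x1 + x2) \<le> norm (x1 - z) + norm (x2 + z)"
        using norm_triangle_ineq[of "x1 - z" "x2 + z"] by simp
      finally show ?thesis using C by (smt (verit) mult_left_mono distrib_left)
    qed
    have g00: "(0,0) \<in> G" using sG subspace_0 by (metis zero_prod_def)
    have Pne: "P \<noteq> {}" using g00 P_def by blast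
    have Pbd: "bdd_above P" unfolding bdd_above_def P_def using key[OF _ g00] by auto
    have c_up: "y - C * norm (x - z) \<le> c" if "(x,y) \<in> G" for x y
      unfolding c_def by (rule cSup_upper) (use that P_def Pbd in auto)
    have c_lo: "c \<le> C * norm (x + z) - y" if "(x,y) \<in> G" for x y
      unfolding c_def by (rule cSup_least) (use Pne P_def key that in auto)
    define G' where "G' = {(x + t *\<^sub>R z, y + t * c) | x y t. (x,y) \<in> G}"
    have memG': "(x + t *\<^sub>R z, y + t * c) \<in> G'" if "(x,y) \<in> G" for x y t
      unfolding G'_def using that by blast
    have "good G'"
      unfolding good_def
    proof (intro conjI)
      show "subspace G'"
        unfolding subspace_def
      proof (intro conjI ballI allI)
        show "0 \<in> G'" using memG'[OF g00, of 0] by (simp add: zero_prod_def)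
      next
        fix u v assume "u \<in> G'" "v \<in> G'"
        then obtain x1 y1 t1 x2 y2 t2 where "(x1,y1) \<in> G" "(x2,y2)\<in>G"
          "u = (x1 + t1 *\<^sub>R z, y1 + t1 * c)" "v = (x2 + t2 *\<^sub>R z, y2 + t2 * c)"
          unfolding G'_def by blast
        moreover have "(x1,y1) + (x2,y2) \<in> G" using calculation sG subspace_add by blast
        moreover have "u + v = ((x1+x2) + (t1+t2) *\<^sub>R z, (y1+y2) + (t1+t2) * c)"
          using calculation by (simp add: scaleR_add_left distrib_right)
        ultimately show "u + v \<in> G'" unfolding G'_def by force
      next
        fix a u assume "u \<in> G'"
        then obtain x y t where "(x,y) \<in> G" "u = (x + t *\<^sub>R z, y + t * c)"
          unfolding G'_def by blast
        moreover have "a *\<^sub>R (x,y) \<in> G" using calculation sG subspace_scale by blast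
        moreover have "a *\<^sub>R u = (a *\<^sub>R x + (a*t) *\<^sub>R z, a * y + (a*t) * c)"
          using calculation by (simp add: scaleR_add_right distrib_left)
        ultimately show "a *\<^sub>R u \<in> G'" unfolding G'_def by force
      qed
      show "G0 \<subseteq> G'"
      proof
        fix u assume "u \<in> G0"
        then have "u \<in> G" using G good_def by blast
        then show "u \<in> G'" using memG'[of "fst u" "snd u" 0] by simp
      qed
      show "\<forall>(x, y)\<in>G'. y \<le> C * norm x"
      proof (clarify)
        fix w v assume "(w,v) \<in> G'"
        then obtain x y t where xy: "(x,y) \<in> G" and w: "w = x + t *\<^sub>R z" and v: "v = y + t * c"
          unfolding G'_def by blast
        consider "t = 0" | "t > 0" | "t < 0" by linarith
        then show "v \<le> C * norm w"
        proof cases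
          case 1 then show ?thesis using bG xy w v by simp
        next
          case 2
          have "(1/t) *\<^sub>R (x,y) \<in> G" using xy sG subspace_scale by blast
          then have "c \<le> C * norm ((1/t) *\<^sub>R x + z) - y / t" using c_lo by simp
          then have "t * c \<le> C * (t * norm ((1/t) *\<^sub>R x + z)) - y"
            using 2 by (simp add: field_simps mult_left_mono)
          moreover have "t * norm ((1/t) *\<^sub>R x + z) = norm w"
          proof -
            have "t * norm ((1/t) *\<^sub>R x + z) = norm (t *\<^sub>R ((1/t) *\<^sub>R x + z))" using 2 by simp
            also have "t *\<^sub>R ((1/t) *\<^sub>R x + z) = w" using 2 w by (simp add: scaleR_add_right)
            finally show ?thesis .
          qed
          ultimately show ?thesis using v by simp
        next
          case 3
          define s where "s = - t"
          have s: "s > 0" using 3 s_def by simp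
          have "(1/s) *\<^sub>R (x,y) \<in> G" using xy sG subspace_scale by blast
          then have "y / s - C * norm ((1/s) *\<^sub>R x - z) \<le> c" using c_up by simp
          then have "y - C * (s * norm ((1/s) *\<^sub>R x - z)) \<le> s * c"
            using s by (simp add: field_simps)
          moreover have "s * norm ((1/s) *\<^sub>R x - z) = norm w"
          proof -
            have "s * norm ((1/s) *\<^sub>R x - z) = norm (s *\<^sub>R ((1/s) *\<^sub>R x - z))" using s by simp
            also have "s *\<^sub>R ((1/s) *\<^sub>R x - z) = w" using s w s_def by (simp add: scaleR_diff_right)
            finally show ?thesis .
          qed
          ultimately have "y - C * norm w \<le> s * c" by simp
          then show ?thesis using v s_def by simp
        qed
      qed
    qed
    moreover have "G \<subseteq> G'" using memG'[of _ _ 0] by auto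
    moreover have "(z, c) \<in> G'" using memG'[OF g00, of 1] by simp
    ultimately show False using maxG nz by blast
  qed
  define g where "g x = (THE y. (x,y) \<in> G)" for x
  have gG: "(x, g x) \<in> G" for x
    unfolding g_def by (rule theI') (use total uniq[OF G] in blast)
  have gU: "g x = y" if "(x,y) \<in> G" for x y using uniq[OF G gG that] .
  have gadd: "g (x + y) = g x + g y" for x y
    using gU[of "x+y" "g x + g y"] gG[of x] gG[of y] sG subspace_add[of G "(x,g x)" "(y, g y)"] by simp
  have gscale: "g (r *\<^sub>R x) = r * g x" for r x
    using gU[of "r *\<^sub>R x" "r * g x"] gG[of x] sG subspace_scale[of G "(x,g x)" r] by simp
  have gb: "\<bar>g x\<bar> \<le> C * norm x" for x
  proof -
    have "g x \<le> C * norm x" using bG gG by blast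
    moreover have "g (-x) \<le> C * norm (-x)" using bG gG by blast
    moreover have "g (-x) = - g x" using gscale[of "-1" x] by simp
    ultimately show ?thesis by simp
  qed
  have bl: "bounded_linear g"
    by (rule bounded_linear_intro[where K=C]) (use gadd gscale gb in \<open>auto simp: mult.commute\<close>)
  have "\<forall>x\<in>S. g x = f x"
  proof
    fix x assume "x \<in> S"
    then have "(x, f x) \<in> G" using G good_def G0_def by blast
    then show "g x = f x" using gU by blast
  qed
  moreover have bg: "blinfun_apply (Blinfun g) = g" using bl by (rule bounded_linear_Blinfun_apply)
  moreover have "norm (Blinfun g) \<le> C"
    by (rule norm_blinfun_bound) (use C gb bg in simp_all)
  ultimately show ?thesis by (intro exI[of _ "Blinfun g"]) simp
qed



lemma hb_sep:
  fixes M :: "'a::real_normed_vector set" and n :: 'a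
  assumes M: "subspace M" and d: "d > 0" and dM: "\<forall>m\<in>M. d \<le> norm (n - m)"
  shows "\<exists>\<phi>::'a\<Rightarrow>\<^sub>L real. blinfun_apply \<phi> n = 1 \<and> (\<forall>m\<in>M. blinfun_apply \<phi> m = 0) \<and> norm \<phi> \<le> 1/d"
proof -
  define S where "S = {m + t *\<^sub>R n | m t. m \<in> M}"
  define f where "f v = (THE t. \<exists>m\<in>M. v = m + t *\<^sub>R n)" for v
  have nM: "n \<notin> M" using dM d by force
  have un: "t = t'" if "m \<in> M" "m' \<in> M" "m + t *\<^sub>R n = m' + t' *\<^sub>R n" for m m' t t'
  proof (rule ccontr)
    assume tt: "t \<noteq> t'"
    have "(t - t') *\<^sub>R n = m' - m" using that(3) by (simp add: algebra_simps)
    then have "(1/(t - t')) *\<^sub>R ((t - t') *\<^sub>R n) = (1/(t - t')) *\<^sub>R (m' - m)" by simp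
    then have "n = (1/(t - t')) *\<^sub>R (m' - m)" using tt by simp
    moreover have "(1/(t - t')) *\<^sub>R (m' - m) \<in> M" using that M by (simp add: subspace_diff subspace_scale)
    ultimately show False using nM by simp
  qed
  have fv: "f (m + t *\<^sub>R n) = t" if "m \<in> M" for m t
    unfolding f_def by (rule the_equality) (use that un in blast)+
  have Ssub: "subspace S"
    unfolding subspace_def
  proof (intro conjI ballI allI)
    show "0 \<in> S" unfolding S_def using M subspace_0 by (auto intro!: exI[of _ 0])
  next
    fix u v assume "u \<in> S" "v \<in> S"
    then obtain m1 t1 m2 t2 where "m1 \<in> M" "m2 \<in> M" "u = m1 + t1 *\<^sub>R n" "v = m2 + t2 *\<^sub>R n"
      unfolding S_def by blast
    moreover have "u + v = (m1 + m2) + (t1 + t2) *\<^sub>R n" using calculation by (simp add: scaleR_add_left)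
    moreover have "m1 + m2 \<in> M" using calculation M subspace_add by blast
    ultimately show "u + v \<in> S" unfolding S_def by blast
  next
    fix c u assume "u \<in> S"
    then obtain m t where "m \<in> M" "u = m + t *\<^sub>R n" unfolding S_def by blast
    moreover have "c *\<^sub>R u = c *\<^sub>R m + (c * t) *\<^sub>R n" using calculation by (simp add: scaleR_add_right)
    moreover have "c *\<^sub>R m \<in> M" using calculation M subspace_scale by blast
    ultimately show "c *\<^sub>R u \<in> S" unfolding S_def by blast
  qed
  have fadd: "\<forall>x\<in>S. \<forall>y\<in>S. f (x + y) = f x + f y"
  proof (intro ballI)
    fix u v assume "u \<in> S" "v \<in> S"
    then obtain m1 t1 m2 t2 where h: "m1 \<in> M" "m2 \<in> M" "u = m1 + t1 *\<^sub>R n" "v = m2 + t2 *\<^sub>R n"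
      unfolding S_def by blast
    have e: "u + v = (m1 + m2) + (t1 + t2) *\<^sub>R n" using h by (simp add: scaleR_add_left)
    have mm: "m1 + m2 \<in> M" using h M subspace_add by blast
    have "f (u + v) = t1 + t2" unfolding e by (rule fv[OF mm])
    then show "f (u + v) = f u + f v" using h fv by simp
  qed
  have fscale: "\<forall>x\<in>S. \<forall>c. f (c *\<^sub>R x) = c * f x"
  proof (intro ballI allI)
    fix c u assume "u \<in> S"
    then obtain m t where "m \<in> M" "u = m + t *\<^sub>R n" unfolding S_def by blast
    moreover have e: "c *\<^sub>R u = c *\<^sub>R m + (c * t) *\<^sub>R n" using calculation by (simp add: scaleR_add_right)
    moreover have mm: "c *\<^sub>R m \<in> M" using calculation M subspace_scale by blast
    moreover have "f (c *\<^sub>R u) = c * t" unfolding e by (rule fv[OF mm])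
    ultimately show "f (c *\<^sub>R u) = c * f u" using fv by simp
  qed
  have fbd: "\<forall>x\<in>S. f x \<le> (1/d) * norm x"
  proof
    fix u assume "u \<in> S"
    then obtain m t where m: "m \<in> M" and u: "u = m + t *\<^sub>R n" unfolding S_def by blast
    have fu: "f u = t" using fv[OF m] u by simp
    show "f u \<le> (1/d) * norm u"
    proof (cases "t = 0")
      case True then show ?thesis using fu d by simp
    next
      case False
      have "- (1/t) *\<^sub>R m \<in> M" using m M subspace_scale by (metis scaleR_minus_left)
      then have "d \<le> norm (n - (- (1/t) *\<^sub>R m))" using dM by blast
      then have "\<bar>t\<bar> * d \<le> \<bar>t\<bar> * norm (n - (- (1/t) *\<^sub>R m))" by (simp add: mult_left_mono)
      also have "\<bar>t\<bar> * norm (n - (- (1/t) *\<^sub>R m)) = norm (t *\<^sub>R (n - (- (1/t) *\<^sub>R m)))" by simp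
      also have "t *\<^sub>R (n - (- (1/t) *\<^sub>R m)) = u" using u False by (simp add: algebra_simps)
      finally have "\<bar>t\<bar> * d \<le> norm u" .
      moreover have "t * d \<le> \<bar>t\<bar> * d" using d by (simp add: mult_right_mono)
      ultimately have "t * d \<le> norm u" by linarith
      then have "t \<le> norm u / d" using d by (simp add: field_simps)
      then show ?thesis using fu by simp
    qed
  qed
  obtain \<phi> :: "'a \<Rightarrow>\<^sub>L real" where phi: "\<forall>x\<in>S. \<phi> x = f x" and nphi: "norm \<phi> \<le> 1/d"
    using hb_core[OF Ssub fadd fscale fbd] d by auto
  have "n \<in> S" unfolding S_def using M subspace_0 by (auto intro!: exI[of _ 0] exI[of _ 1])
  moreover have "f n = 1" using fv[of 0 1] subspace_0[OF M] by simp
  moreover have "\<forall>m\<in>M. \<phi> m = 0"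
  proof
    fix m assume "m \<in> M"
    moreover have "m = m + 0 *\<^sub>R n" by simp
    moreover then have "m \<in> S" unfolding S_def using calculation by blast
    ultimately show "\<phi> m = 0" using phi fv[of m 0] by simp
  qed
  ultimately show ?thesis using phi nphi by (intro exI[of _ \<phi>]) auto
qed

lemma adj_apply:
  assumes "bounded_bilinear f"
  shows "blinfun_apply (adj f z x) y = blinfun_apply z (f x y)"
proof -
  have "bounded_linear (\<lambda>y. blinfun_apply z (f x y))"
    by (rule bounded_linear_blinfun_apply) (rule bounded_bilinear.bounded_linear_right[OF assms])
  then show ?thesis unfolding adj_def by (simp add: bounded_linear_Blinfun_apply)
qed

lemma bb_adj:
  assumes bb: "bounded_bilinear f"
  shows "bounded_bilinear (adj f)"
proof -
  obtain K where K: "\<And>a b. norm (f a b) \<le> norm a * norm b * K" and "K \<ge> 0"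
    using bounded_bilinear.pos_bounded[OF bb] by (metis less_eq_real_def)
  show ?thesis
  proof (rule bounded_bilinear.intro)
    show "adj f (a + a') b = adj f a b + adj f a' b" for a a' b
      by (rule blinfun_eqI) (simp add: adj_apply[OF bb] plus_blinfun.rep_eq scaleR_blinfun.rep_eq blinfun.add_left)
    show "adj f a (b + b') = adj f a b + adj f a b'" for a b b'
      by (rule blinfun_eqI) (simp add: adj_apply[OF bb] plus_blinfun.rep_eq scaleR_blinfun.rep_eq bounded_bilinear.add_left[OF bb] blinfun.add_right)
    show "adj f (r *\<^sub>R a) b = r *\<^sub>R adj f a b" for r a b
      by (rule blinfun_eqI) (simp add: adj_apply[OF bb] plus_blinfun.rep_eq scaleR_blinfun.rep_eq blinfun.scaleR_left)
    show "adj f a (r *\<^sub>R b) = r *\<^sub>R adj f a b" for r a b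
      by (rule blinfun_eqI) (simp add: adj_apply[OF bb] plus_blinfun.rep_eq scaleR_blinfun.rep_eq bounded_bilinear.scaleR_left[OF bb] blinfun.scaleR_right)
    show "\<exists>K. \<forall>a b. norm (adj f a b) \<le> norm a * norm b * K"
    proof (intro exI allI)
      fix a b
      show "norm (adj f a b) \<le> norm a * norm b * K"
      proof (rule norm_blinfun_bound)
        show "0 \<le> norm a * norm b * K" using \<open>K \<ge> 0\<close> by simp
        fix y
        have "norm (adj f a b y) = norm (a (f b y))" by (simp add: adj_apply[OF bb])
        also have "\<dots> \<le> norm a * norm (f b y)" by (rule norm_blinfun)
        also have "\<dots> \<le> norm a * (norm b * norm y * K)" by (rule mult_left_mono[OF K]) simp
        finally show "norm (adj f a b y) \<le> norm a * norm b * K * norm y" by (simp add: ac_simps)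
      qed
    qed
  qed
qed

lemma bb_flip: "bounded_bilinear f \<Longrightarrow> bounded_bilinear (bflip f)"
  unfolding bflip_def by (rule bounded_bilinear.flip)

lemma canon_apply: "blinfun_apply (canon_embed x) f = blinfun_apply f x"
  unfolding canon_embed_def by (simp add: bounded_linear_Blinfun_apply blinfun.bounded_linear_left)



lemma canon_linear: "bounded_linear (canon_embed :: 'a::real_normed_vector \<Rightarrow> _)"
proof (rule bounded_linear_intro[where K=1])
  show "canon_embed (x + y) = canon_embed x + canon_embed y" for x y :: 'a
    by (rule blinfun_eqI) (simp add: canon_apply plus_blinfun.rep_eq blinfun.add_right)
  show "canon_embed (r *\<^sub>R x) = r *\<^sub>R canon_embed x" for r and x :: 'a
    by (rule blinfun_eqI) (simp add: canon_apply scaleR_blinfun.rep_eq blinfun.scaleR_right)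
  show "norm (canon_embed x) \<le> norm x * 1" for x :: 'a
  proof (rule norm_blinfun_bound)
    fix f :: "'a \<Rightarrow>\<^sub>L real"
    show "norm (canon_embed x f) \<le> norm x * 1 * norm f"
      using norm_blinfun[of f x] by (simp add: canon_apply mult.commute)
  qed simp
qed

lemma canon_below: "norm (x::'a::real_normed_vector) \<le> norm (canon_embed x)"
proof (cases "x = 0")
  case True then show ?thesis by simp
next
  case False
  have "subspace {0::'a}" by (simp add: subspace_def)
  moreover have "\<forall>m\<in>{0::'a}. norm x \<le> norm (x - m)" by simp
  ultimately obtain \<phi> :: "'a \<Rightarrow>\<^sub>L real" where p1: "\<phi> x = 1" and pn: "norm \<phi> \<le> 1 / norm x"
    using hb_sep[of "{0}" "norm x" x] False by auto
  have "1 = canon_embed x \<phi>" by (simp add: canon_apply p1)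
  also have "\<dots> \<le> norm (canon_embed x) * norm \<phi>"
    using norm_blinfun[of "canon_embed x" \<phi>] by simp
  also have "\<dots> \<le> norm (canon_embed x) * (1 / norm x)"
    by (rule mult_left_mono[OF pn]) simp
  finally show ?thesis using False by (simp add: field_simps)
qed

lemma canon_closed: "closed (range (canon_embed :: 'a::banach \<Rightarrow> _))"
proof -
  have "complete (canon_embed ` (UNIV :: 'a set))"
    by (rule complete_isometric_image[where e=1]) (auto simp: canon_linear canon_below complete_UNIV)
  then show ?thesis by (simp add: complete_eq_closed)
qed

lemma canon_subspace: "subspace (range (canon_embed :: 'a::real_normed_vector \<Rightarrow> _))"
proof -
  interpret L: bounded_linear "canon_embed :: 'a \<Rightarrow> _" by (rule canon_linear)
  show ?thesis unfolding subspace_def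
  proof (intro conjI ballI allI)
    have "0 = canon_embed (0::'a)" by (simp add: L.zero)
    then show "0 \<in> range (canon_embed :: 'a \<Rightarrow> _)" by blast
  next
    fix u v assume "u \<in> range (canon_embed :: 'a \<Rightarrow> _)" "v \<in> range (canon_embed :: 'a \<Rightarrow> _)"
    then obtain a b :: 'a where "u = canon_embed a" "v = canon_embed b" by blast
    then have "u + v = canon_embed (a + b)" by (simp add: L.add)
    then show "u + v \<in> range (canon_embed :: 'a \<Rightarrow> _)" by blast
  next
    fix c u assume "u \<in> range (canon_embed :: 'a \<Rightarrow> _)"
    then obtain a :: 'a where "u = canon_embed a" by blast
    then have "c *\<^sub>R u = canon_embed (c *\<^sub>R a)" by (simp add: L.scaleR)
    then show "c *\<^sub>R u \<in> range (canon_embed :: 'a \<Rightarrow> _)" by blast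
  qed
qed

lemma bflip_app: "bflip h a b = h b a" by (simp add: bflip_def)

lemma main:
  fixes \<rho> :: "'x::banach \<Rightarrow> 'a::real_normed_vector \<Rightarrow> 'x" and e :: "'i \<Rightarrow> 'a"
  assumes bb: "bounded_bilinear \<rho>" and F: "F \<noteq> bot" and eb: "bounded (range e)"
    and lim: "\<forall>x. ((\<lambda>\<alpha>. \<rho> x (e \<alpha>)) \<longlongrightarrow> x) F"
  shows "arens_regular (adj \<rho>) \<longleftrightarrow> reflexive_space TYPE('x)"
proof -
  define g where "g = adj \<rho>"
  have bg: "bounded_bilinear g" unfolding g_def by (rule bb_adj[OF bb])
  have bg1: "bounded_bilinear (adj g)" by (rule bb_adj[OF bg])
  have bg2: "bounded_bilinear (adj (adj g))" by (rule bb_adj[OF bg1])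
  have bf: "bounded_bilinear (bflip g)" by (rule bb_flip[OF bg])
  have bf1: "bounded_bilinear (adj (bflip g))" by (rule bb_adj[OF bf])
  have bf2: "bounded_bilinear (adj (adj (bflip g)))" by (rule bb_adj[OF bf1])
  have a0: "g xs x a = xs (\<rho> x a)" for xs x a unfolding g_def by (rule adj_apply[OF bb])
  have a1: "adj g \<Phi> xs x = \<Phi> (g xs x)" for \<Phi> xs x by (rule adj_apply[OF bg])
  have a2: "adj (adj g) n \<Phi> xs = n (adj g \<Phi> xs)" for n \<Phi> xs by (rule adj_apply[OF bg1])
  have a3: "adj (adj (adj g)) m n \<Phi> = m (adj (adj g) n \<Phi>)" for m n \<Phi> by (rule adj_apply[OF bg2])
  have b1: "adj (bflip g) \<Phi> x xs = \<Phi> (g xs x)" for \<Phi> xs x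
    using adj_apply[OF bf] by (simp add: bflip_def)
  have b2: "adj (adj (bflip g)) m \<Phi> x = m (adj (bflip g) \<Phi> x)" for m \<Phi> x by (rule adj_apply[OF bf1])
  have b3: "adj (adj (adj (bflip g))) n m \<Phi> = n (adj (adj (bflip g)) m \<Phi>)" for m n \<Phi>
    by (rule adj_apply[OF bf2])
  show ?thesis
  proof
    assume reg: "arens_regular (adj \<rho>)"
    obtain K where K: "\<And>\<alpha>. norm (e \<alpha>) \<le> K" using eb unfolding bounded_iff by auto
    have K0: "K \<ge> 0" using K[of undefined] norm_ge_zero order_trans by blast
    define V where "V = {\<psi> :: 'a \<Rightarrow>\<^sub>L real. \<exists>l. ((\<lambda>\<alpha>. \<psi> (e \<alpha>)) \<longlongrightarrow> l) F}"
    define f0 where "f0 \<psi> = Lim F (\<lambda>\<alpha>. blinfun_apply \<psi> (e \<alpha>))" for \<psi> :: "'a \<Rightarrow>\<^sub>L real"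
    have ntriv: "\<not> trivial_limit F" using F by simp
    have f0l: "f0 \<psi> = l" if "((\<lambda>\<alpha>. \<psi> (e \<alpha>)) \<longlongrightarrow> l) F" for \<psi> :: "'a \<Rightarrow>\<^sub>L real" and l
      unfolding f0_def using tendsto_Lim[OF ntriv that] .
    have Vsub: "subspace V"
      unfolding subspace_def
    proof (intro conjI ballI allI)
      have "((\<lambda>\<alpha>. (0::'a \<Rightarrow>\<^sub>L real) (e \<alpha>)) \<longlongrightarrow> 0) F" by simp
      then show "0 \<in> V" unfolding V_def by blast
    next
      fix u v assume "u \<in> V" "v \<in> V"
      then obtain l l' where "((\<lambda>\<alpha>. u (e \<alpha>)) \<longlongrightarrow> l) F" "((\<lambda>\<alpha>. v (e \<alpha>)) \<longlongrightarrow> l') F"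
        unfolding V_def by blast
      from tendsto_add[OF this] have "((\<lambda>\<alpha>. (u + v) (e \<alpha>)) \<longlongrightarrow> l + l') F"
        by (simp add: plus_blinfun.rep_eq)
      then show "u + v \<in> V" unfolding V_def by blast
    next
      fix c u assume "u \<in> V"
      then obtain l where "((\<lambda>\<alpha>. u (e \<alpha>)) \<longlongrightarrow> l) F" unfolding V_def by blast
      from tendsto_mult_left[OF this, of c] have "((\<lambda>\<alpha>. (c *\<^sub>R u) (e \<alpha>)) \<longlongrightarrow> c * l) F"
        by (simp add: scaleR_blinfun.rep_eq)
      then show "c *\<^sub>R u \<in> V" unfolding V_def by blast
    qed
    have fadd: "\<forall>x\<in>V. \<forall>y\<in>V. f0 (x + y) = f0 x + f0 y"
    proof (intro ballI)
      fix \<psi> \<psi>' assume "\<psi> \<in> V" "\<psi>' \<in> V"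
      then obtain l l' where "((\<lambda>\<alpha>. \<psi> (e \<alpha>)) \<longlongrightarrow> l) F" "((\<lambda>\<alpha>. \<psi>' (e \<alpha>)) \<longlongrightarrow> l') F"
        unfolding V_def by blast
      moreover from tendsto_add[OF this] have "((\<lambda>\<alpha>. (\<psi> + \<psi>') (e \<alpha>)) \<longlongrightarrow> l + l') F"
        by (simp add: plus_blinfun.rep_eq)
      ultimately show "f0 (\<psi> + \<psi>') = f0 \<psi> + f0 \<psi>'" using f0l by metis
    qed
    have fscale: "\<forall>x\<in>V. \<forall>c. f0 (c *\<^sub>R x) = c * f0 x"
    proof (intro ballI allI)
      fix \<psi> c assume "\<psi> \<in> V"
      then obtain l where "((\<lambda>\<alpha>. \<psi> (e \<alpha>)) \<longlongrightarrow> l) F" unfolding V_def by blast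
      moreover from tendsto_mult_left[OF this, of c] have "((\<lambda>\<alpha>. (c *\<^sub>R \<psi>) (e \<alpha>)) \<longlongrightarrow> c * l) F"
        by (simp add: scaleR_blinfun.rep_eq)
      ultimately show "f0 (c *\<^sub>R \<psi>) = c * f0 \<psi>" using f0l by metis
    qed
    have fbd: "\<forall>x\<in>V. f0 x \<le> K * norm x"
    proof
      fix \<psi> assume "\<psi> \<in> V"
      then obtain l where l: "((\<lambda>\<alpha>. \<psi> (e \<alpha>)) \<longlongrightarrow> l) F" unfolding V_def by blast
      have "l \<le> K * norm \<psi>"
      proof (rule tendsto_le[OF F tendsto_const l], rule always_eventually, rule allI)
        fix \<alpha>
        have "\<psi> (e \<alpha>) \<le> norm (\<psi> (e \<alpha>))" by simp
        also have "\<dots> \<le> norm \<psi> * norm (e \<alpha>)" by (rule norm_blinfun)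
        also have "\<dots> \<le> norm \<psi> * K" by (rule mult_left_mono[OF K]) simp
        finally show "\<psi> (e \<alpha>) \<le> K * norm \<psi>" by (simp add: mult.commute)
      qed
      then show "f0 \<psi> \<le> K * norm \<psi>" using f0l[OF l] by simp
    qed
    obtain E :: "('a \<Rightarrow>\<^sub>L real) \<Rightarrow>\<^sub>L real" where E: "\<forall>\<psi>\<in>V. E \<psi> = f0 \<psi>"
      using hb_core[OF Vsub fadd fscale fbd K0] by blast
    have Eg: "E (g xs x) = xs x" for xs x
    proof -
      have "((\<lambda>\<alpha>. xs (\<rho> x (e \<alpha>))) \<longlongrightarrow> xs x) F"
        using lim by (intro blinfun.tendsto) (auto intro: tendsto_const)
      then have l: "((\<lambda>\<alpha>. (g xs x) (e \<alpha>)) \<longlongrightarrow> xs x) F" by (simp add: a0)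
      then have "g xs x \<in> V" unfolding V_def by blast
      then show ?thesis using E f0l[OF l] by simp
    qed
    have A2: "adj (adj g) n E = n" for n
    proof (rule blinfun_eqI)
      fix xs
      have "adj g E xs = xs" by (rule blinfun_eqI) (simp add: a1 Eg)
      then show "adj (adj g) n E xs = n xs" by (simp add: a2)
    qed
    have B1: "adj (bflip g) E x = canon_embed x" for x
      by (rule blinfun_eqI) (simp add: b1 Eg canon_apply)
    have B2: "adj (adj (bflip g)) m E = 0" if "\<forall>x. m (canon_embed x) = 0" for m :: "(('x \<Rightarrow>\<^sub>L real) \<Rightarrow>\<^sub>L real) \<Rightarrow>\<^sub>L real"
      by (rule blinfun_eqI) (simp add: b2 B1 that)
    have reg': "adj (adj (adj g)) = bflip (adj (adj (adj (bflip g))))"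
      using reg unfolding arens_regular_def g_def .
    have R: "m (adj (adj g) n E) = n (adj (adj (bflip g)) m E)"
      for m :: "(('x \<Rightarrow>\<^sub>L real) \<Rightarrow>\<^sub>L real) \<Rightarrow>\<^sub>L real" and n
    proof -
      have "adj (adj (adj g)) m n E = bflip (adj (adj (adj (bflip g)))) m n E" using reg' by simp
      then show ?thesis by (simp add: a3 b3 bflip_app)
    qed
    show "reflexive_space TYPE('x)"
      unfolding reflexive_space_def
    proof (rule surjI[where f="\<lambda>n. SOME x. canon_embed x = n"], rule ccontr)
      fix n :: "('x \<Rightarrow>\<^sub>L real) \<Rightarrow>\<^sub>L real"
      assume nr: "canon_embed (SOME x. canon_embed x = n) \<noteq> n"
      have nR: "n \<notin> range (canon_embed :: 'x \<Rightarrow> _)"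
      proof
        assume "n \<in> range (canon_embed :: 'x \<Rightarrow> _)"
        then have "\<exists>x::'x. canon_embed x = n" by auto
        then have "canon_embed (SOME x::'x. canon_embed x = n) = n" by (rule someI_ex)
        then show False using nr by simp
      qed
      define d where "d = infdist n (range (canon_embed :: 'x \<Rightarrow> _))"
      have d: "d > 0" unfolding d_def using canon_closed nR by (intro infdist_pos_not_in_closed) auto
      have dM: "\<forall>m\<in>range (canon_embed :: 'x \<Rightarrow> _). d \<le> norm (n - m)"
      proof
        fix m assume "m \<in> range (canon_embed :: 'x \<Rightarrow> _)"
        then have "infdist n (range (canon_embed :: 'x \<Rightarrow> _)) \<le> dist n m" by (rule infdist_le)
        then show "d \<le> norm (n - m)" by (simp add: d_def dist_norm)
      qed
      obtain m0 :: "(('x \<Rightarrow>\<^sub>L real) \<Rightarrow>\<^sub>L real) \<Rightarrow>\<^sub>L real" where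
        m1: "m0 n = 1" and m0: "\<forall>m\<in>range (canon_embed :: 'x \<Rightarrow> _). m0 m = 0"
        using hb_sep[OF canon_subspace d dM] by blast
      have "m0 (adj (adj g) n E) = 1" using A2 m1 by simp
      moreover have "n (adj (adj (bflip g)) m0 E) = 0" using B2[of m0] m0 by simp
      ultimately show False using R[of m0 n] by simp
    qed
  next
    assume refl: "reflexive_space TYPE('x)"
    show "arens_regular (adj \<rho>)"
      unfolding arens_regular_def g_def[symmetric]
    proof (intro ext blinfun_eqI)
      fix m n \<Phi>
      obtain x0 :: 'x where x0: "n = canon_embed x0" using refl unfolding reflexive_space_def surj_def by blast
      have "adj (adj g) n \<Phi> = adj (bflip g) \<Phi> x0"
        by (rule blinfun_eqI) (simp add: a2 a1 b1 x0 canon_apply)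
      then show "adj (adj (adj g)) m n \<Phi> = bflip (adj (adj (adj (bflip g)))) m n \<Phi>"
        by (simp add: a3 b3 b2 bflip_app x0 canon_apply)
    qed
  qed
qed


theorem proposition3p6:
  fixes \<pi>1 :: "'a::{real_normed_algebra, banach} \<Rightarrow> 'x::banach \<Rightarrow> 'x"
    and \<pi>2 :: "'x \<Rightarrow> 'a \<Rightarrow> 'x"
  assumes "left_banach_module \<pi>1"
    and "right_banach_module \<pi>2"
  shows "((\<exists>(e::'i \<Rightarrow> 'a) F. bounded_left_approx_identity \<pi>1 e F) \<longrightarrow>
           (arens_regular (adj (bflip \<pi>1)) \<longleftrightarrow> reflexive_space TYPE('x)))
       \<and> ((\<exists>(e::'i \<Rightarrow> 'a) F. bounded_right_approx_identity \<pi>2 e F) \<longrightarrow>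
           (arens_regular (adj \<pi>2) \<longleftrightarrow> reflexive_space TYPE('x)))"
proof -
  have L: "bounded_bilinear \<pi>1" using assms(1) unfolding left_banach_module_def by blast
  have R: "bounded_bilinear \<pi>2" using assms(2) unfolding right_banach_module_def by blast
  show ?thesis
  proof (intro conjI impI)
    assume "\<exists>(e::'i \<Rightarrow> 'a) F. bounded_left_approx_identity \<pi>1 e F"
    then obtain e :: "'i \<Rightarrow> 'a" and F where h: "bounded_left_approx_identity \<pi>1 e F" by blast
    show "arens_regular (adj (bflip \<pi>1)) \<longleftrightarrow> reflexive_space TYPE('x)"
      by (rule main[OF bb_flip[OF L], of F e])
        (use h in \<open>auto simp: bounded_left_approx_identity_def bflip_app\<close>)
  next
    assume "\<exists>(e::'i \<Rightarrow> 'a) F. bounded_right_approx_identity \<pi>2 e F"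
    then obtain e :: "'i \<Rightarrow> 'a" and F where h: "bounded_right_approx_identity \<pi>2 e F" by blast
    show "arens_regular (adj \<pi>2) \<longleftrightarrow> reflexive_space TYPE('x)"
      by (rule main[OF R, of F e])
        (use h in \<open>auto simp: bounded_right_approx_identity_def\<close>)
  qed
qed

end
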